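(* For every angle $\theta\in\mathbb{R}$, letting $\ket{R_\theta}=2^{-1/2}(\ket{0}+e^{i\theta}\ket{1})$, we have $\chi(R_\theta^{\otimes m}) = O(2^{m/2})$ as $m\to\infty$.
   Context: An $n$-qubit stabilizer state is a state of the form $C\ket{0^n}$ with $C$ an $n$-qubit Clifford unitary. The stabilizer rank $\chi(\psi)$ of an $n$-qubit state $\ket{\psi}$ is the minimum $k$ such that $\ket{\psi}=\sum_{i=1}^k c_i\ket{\Phi_i}$ with $c_i\in\mathbb{C}$ and $\ket{\Phi_i}$ stabilizer states. $R_\theta^{\otimes m}$ denotes the state $\ket{R_\theta}^{\otimes m}$. *)

theory Defs
  imports "Jordan_Normal_Form.Matrix" "HOL-Library.Landau_Symbols" Complex_Main
begin

text \<open>n-qubit states are complex vectors of dimension 2^n; basis state |x> for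
x < 2^n, where bit j of x is the value of qubit j.\<close>

definition adj :: "complex mat \<Rightarrow> complex mat" where
  "adj U = mat (dim_col U) (dim_row U) (\<lambda>(i,j). cnj (U $$ (j,i)))"

definition unitary_mat :: "nat \<Rightarrow> complex mat \<Rightarrow> bool" where
  "unitary_mat N U \<longleftrightarrow> U \<in> carrier_mat N N \<and> U * adj U = 1\<^sub>m N \<and> adj U * U = 1\<^sub>m N"

definition pauli_op :: "nat \<Rightarrow> nat \<Rightarrow> nat \<Rightarrow> complex mat" where
  "pauli_op n a b = mat (2^n) (2^n)
     (\<lambda>(y,x). if y = Bit_Operations.xor x a then (-1) ^ card {j. j < n \<and> bit b j \<and> bit x j} else 0)"

definition pauli_group :: "nat \<Rightarrow> complex mat set" where
  "pauli_group n = {(\<i> ^ k) \<cdot>\<^sub>m pauli_op n a b | k a b. a < 2^n \<and> b < 2^n}"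

definition clifford :: "nat \<Rightarrow> complex mat set" where
  "clifford n = {C. unitary_mat (2^n) C \<and>
       (\<forall>P \<in> pauli_group n. C * P * adj C \<in> pauli_group n)}"

definition stabilizer_states :: "nat \<Rightarrow> complex vec set" where
  "stabilizer_states n = {C *\<^sub>v unit_vec (2^n) 0 | C. C \<in> clifford n}"

definition stabilizer_rank :: "nat \<Rightarrow> complex vec \<Rightarrow> nat" where
  "stabilizer_rank n \<psi> = (LEAST k. \<exists>(c :: nat \<Rightarrow> complex) (\<Phi> :: nat \<Rightarrow> complex vec).
      (\<forall>i<k. \<Phi> i \<in> stabilizer_states n) \<and>
      \<psi> = vec (2^n) (\<lambda>x. \<Sum>i<k. c i * (\<Phi> i $ x)))"

definition kron_vec :: "complex vec \<Rightarrow> complex vec \<Rightarrow> complex vec" where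
  "kron_vec u v = vec (dim_vec u * dim_vec v) (\<lambda>i. u $ (i div dim_vec v) * v $ (i mod dim_vec v))"

definition R_state :: "real \<Rightarrow> complex vec" where
  "R_state \<theta> = vec 2 (\<lambda>i. if i = 0 then 1 / sqrt 2 else cis \<theta> / sqrt 2)"

fun tensor_pow :: "complex vec \<Rightarrow> nat \<Rightarrow> complex vec" where
  "tensor_pow v 0 = vec 1 (\<lambda>_. 1)"
| "tensor_pow v (Suc m) = kron_vec (tensor_pow v m) v"

end

theory Submission
  imports Defs
begin


lemma sum_split_add:
  fixes f :: "nat \<Rightarrow> 'a::comm_monoid_add"
  shows "(\<Sum>k<m+n. f k) = (\<Sum>k<m. f k) + (\<Sum>k<n. f (m+k))"
  by (induction n) (simp_all add: add.assoc)

lemma sum_split_mult: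
  fixes f :: "nat \<Rightarrow> 'a::comm_monoid_add"
  shows "(\<Sum>k<a*b. f k) = (\<Sum>i<a. \<Sum>j<b. f (i*b + j))"
proof (induction a)
  case 0 then show ?case by simp
next
  case (Suc a)
  have "(\<Sum>k<Suc a*b. f k) = (\<Sum>k<a*b + b. f k)" by (simp add: add.commute)
  also have "\<dots> = (\<Sum>k<a*b. f k) + (\<Sum>j<b. f (a*b+j))" by (rule sum_split_add)
  also have "\<dots> = (\<Sum>i<a. \<Sum>j<b. f (i*b + j)) + (\<Sum>j<b. f (a*b+j))" using Suc by (rule arg_cong)
  also have "\<dots> = (\<Sum>i<Suc a. \<Sum>j<b. f (i*b + j))" by (rule sum.lessThan_Suc[symmetric])
  finally show ?case .
qed

lemma divmod_simps:
  fixes k2 m2 :: nat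
  assumes "k2 < m2"
  shows "(k1*m2+k2) div m2 = k1" "(k1*m2+k2) mod m2 = k2"
  using assms by auto

lemma dim_kron_vec[simp]: "dim_vec (kron_vec u v) = dim_vec u * dim_vec v"
  by (simp add: kron_vec_def)

lemma index_kron_vec:
  "i < dim_vec u * dim_vec v \<Longrightarrow> kron_vec u v $ i = u $ (i div dim_vec v) * v $ (i mod dim_vec v)"
  by (simp add: kron_vec_def)

definition kron_mat :: "complex mat \<Rightarrow> complex mat \<Rightarrow> complex mat" where
  "kron_mat A B = mat (dim_row A * dim_row B) (dim_col A * dim_col B)
     (\<lambda>(i,j). A $$ (i div dim_row B, j div dim_col B) * B $$ (i mod dim_row B, j mod dim_col B))"

lemma dim_kron_mat[simp]:
  "dim_row (kron_mat A B) = dim_row A * dim_row B"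
  "dim_col (kron_mat A B) = dim_col A * dim_col B"
  by (simp_all add: kron_mat_def)

lemma kron_mat_carrier:
  "A \<in> carrier_mat a b \<Longrightarrow> B \<in> carrier_mat c d \<Longrightarrow> kron_mat A B \<in> carrier_mat (a*c) (b*d)"
  unfolding carrier_mat_def by auto

lemma index_kron_mat:
  "i < dim_row A * dim_row B \<Longrightarrow> j < dim_col A * dim_col B \<Longrightarrow>
   kron_mat A B $$ (i,j) = A $$ (i div dim_row B, j div dim_col B) * B $$ (i mod dim_row B, j mod dim_col B)"
  by (simp add: kron_mat_def)

lemma div_lt: "(i::nat) < a * b \<Longrightarrow> i div b < a"
  by (rule less_mult_imp_div_less)

lemma mod_lt: "(i::nat) < a * b \<Longrightarrow> i mod b < b"
  by (cases b) auto

lemma idx_lt: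
  fixes k1 k2 m1 m2 :: nat
  assumes "k1 < m1" "k2 < m2"
  shows "k1*m2+k2 < m1*m2"
proof -
  have "Suc k1 * m2 \<le> m1*m2" using mult_le_mono1[of "Suc k1" m1 m2] assms by simp
  then show ?thesis using assms by simp
qed

lemma kron_mult:
  assumes A: "A \<in> carrier_mat n1 m1" and B: "B \<in> carrier_mat n2 m2"
    and C: "C \<in> carrier_mat m1 l1" and D: "D \<in> carrier_mat m2 l2"
  shows "kron_mat A B * kron_mat C D = kron_mat (A*C) (B*D)"
proof (rule eq_matI)
  fix i j assume i: "i < dim_row (kron_mat (A*C) (B*D))" and j: "j < dim_col (kron_mat (A*C) (B*D))"
  from i have i': "i < n1*n2" using A B by simp
  from j have j': "j < l1*l2" using C D by simp
  have "(kron_mat A B * kron_mat C D) $$ (i,j) =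
     (\<Sum>k < m1*m2. kron_mat A B $$ (i,k) * kron_mat C D $$ (k,j))"
    using A B C D i' j' by (simp add: scalar_prod_def atLeast0LessThan)
  also have "\<dots> = (\<Sum>k1<m1. \<Sum>k2<m2. kron_mat A B $$ (i,k1*m2+k2) * kron_mat C D $$ (k1*m2+k2,j))"
    by (rule sum_split_mult)
  also have "\<dots> = (\<Sum>k1<m1. \<Sum>k2<m2. (A $$ (i div n2, k1) * C $$ (k1, j div l2)) *
        (B $$ (i mod n2, k2) * D $$ (k2, j mod l2)))"
  proof (intro sum.cong refl)
    fix k1 k2 assume k1: "k1 \<in> {..<m1}" and k2: "k2 \<in> {..<m2}"
    have "k1*m2+k2 < m1*m2" using k1 k2 idx_lt by simp
    then show "kron_mat A B $$ (i,k1*m2+k2) * kron_mat C D $$ (k1*m2+k2,j) =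
        (A $$ (i div n2, k1) * C $$ (k1, j div l2)) * (B $$ (i mod n2, k2) * D $$ (k2, j mod l2))"
      using A B C D i' j' k2 by (simp add: index_kron_mat)
  qed
  also have "\<dots> = (\<Sum>k1<m1. A $$ (i div n2, k1) * C $$ (k1, j div l2)) *
                  (\<Sum>k2<m2. B $$ (i mod n2, k2) * D $$ (k2, j mod l2))"
    by (simp add: sum_product)
  also have "\<dots> = kron_mat (A*C) (B*D) $$ (i,j)"
    using A B C D i' j' div_lt[OF i'] mod_lt[OF i'] div_lt[OF j'] mod_lt[OF j']
    by (simp add: index_kron_mat scalar_prod_def atLeast0LessThan)
  finally show "(kron_mat A B * kron_mat C D) $$ (i,j) = kron_mat (A*C) (B*D) $$ (i,j)" .
next
  show "dim_row (kron_mat A B * kron_mat C D) = dim_row (kron_mat (A*C) (B*D))" using A B C D by simp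
  show "dim_col (kron_mat A B * kron_mat C D) = dim_col (kron_mat (A*C) (B*D))" using A B C D by simp
qed

lemma kron_mult_vec:
  assumes A: "A \<in> carrier_mat n1 m1" and B: "B \<in> carrier_mat n2 m2"
    and u: "dim_vec u = m1" and v: "dim_vec v = m2"
  shows "kron_mat A B *\<^sub>v kron_vec u v = kron_vec (A *\<^sub>v u) (B *\<^sub>v v)"
proof (rule eq_vecI)
  fix i assume i: "i < dim_vec (kron_vec (A *\<^sub>v u) (B *\<^sub>v v))"
  from i have i': "i < n1*n2" using A B by simp
  have "(kron_mat A B *\<^sub>v kron_vec u v) $ i = (\<Sum>k < m1*m2. kron_mat A B $$ (i,k) * kron_vec u v $ k)"
    using A B u v i' by (simp add: scalar_prod_def atLeast0LessThan)
  also have "\<dots> = (\<Sum>k1<m1. \<Sum>k2<m2. kron_mat A B $$ (i,k1*m2+k2) * kron_vec u v $ (k1*m2+k2))"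
    by (rule sum_split_mult)
  also have "\<dots> = (\<Sum>k1<m1. \<Sum>k2<m2. (A $$ (i div n2, k1) * u $ k1) * (B $$ (i mod n2, k2) * v $ k2))"
  proof (intro sum.cong refl)
    fix k1 k2 assume k1: "k1 \<in> {..<m1}" and k2: "k2 \<in> {..<m2}"
    have "k1*m2+k2 < m1*m2" using k1 k2 idx_lt by simp
    then show "kron_mat A B $$ (i,k1*m2+k2) * kron_vec u v $ (k1*m2+k2) =
        (A $$ (i div n2, k1) * u $ k1) * (B $$ (i mod n2, k2) * v $ k2)"
      using A B u v i' k2 by (simp add: index_kron_mat index_kron_vec)
  qed
  also have "\<dots> = (\<Sum>k1<m1. A $$ (i div n2, k1) * u $ k1) * (\<Sum>k2<m2. B $$ (i mod n2, k2) * v $ k2)"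
    by (simp add: sum_product)
  also have "\<dots> = kron_vec (A *\<^sub>v u) (B *\<^sub>v v) $ i"
    using A B u v i' div_lt[OF i'] mod_lt[OF i']
    by (simp add: index_kron_vec scalar_prod_def atLeast0LessThan)
  finally show "(kron_mat A B *\<^sub>v kron_vec u v) $ i = kron_vec (A *\<^sub>v u) (B *\<^sub>v v) $ i" .
next
  show "dim_vec (kron_mat A B *\<^sub>v kron_vec u v) = dim_vec (kron_vec (A *\<^sub>v u) (B *\<^sub>v v))"
    using A B by simp
qed

lemma adj_carrier: "A \<in> carrier_mat n m \<Longrightarrow> adj A \<in> carrier_mat m n"
  unfolding carrier_mat_def adj_def by auto

lemma dim_adj[simp]: "dim_row (adj A) = dim_col A" "dim_col (adj A) = dim_row A"
  by (simp_all add: adj_def)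

lemma index_adj: "i < dim_col A \<Longrightarrow> j < dim_row A \<Longrightarrow> adj A $$ (i,j) = cnj (A $$ (j,i))"
  by (simp add: adj_def)

lemma adj_kron: "adj (kron_mat A B) = kron_mat (adj A) (adj B)"
proof (rule eq_matI)
  fix i j assume i: "i < dim_row (kron_mat (adj A) (adj B))" and j: "j < dim_col (kron_mat (adj A) (adj B))"
  then have i': "i < dim_col A * dim_col B" and j': "j < dim_row A * dim_row B" by simp_all
  show "adj (kron_mat A B) $$ (i,j) = kron_mat (adj A) (adj B) $$ (i,j)"
    using i' j' div_lt[OF i'] mod_lt[OF i'] div_lt[OF j'] mod_lt[OF j']
    by (simp add: index_adj index_kron_mat)
qed simp_all

lemma adj_mult:
  assumes A: "A \<in> carrier_mat n m" and B: "B \<in> carrier_mat m l"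
  shows "adj (A * B) = adj B * adj A"
proof (rule eq_matI)
  fix i j assume i: "i < dim_row (adj B * adj A)" and j: "j < dim_col (adj B * adj A)"
  then have i': "i < l" and j': "j < n" using A B by simp_all
  show "adj (A * B) $$ (i,j) = (adj B * adj A) $$ (i,j)"
    using A B i' j' by (simp add: index_adj scalar_prod_def cnj_sum mult.commute)
qed (use A B in simp_all)

lemma adj_one[simp]: "adj (1\<^sub>m n) = 1\<^sub>m n"
  by (rule eq_matI) (auto simp: index_adj)

lemma adj_smult: "adj (x \<cdot>\<^sub>m A) = cnj x \<cdot>\<^sub>m adj A"
  by (rule eq_matI) (auto simp: index_adj)

lemma eq_divmod: "(y::nat) = z \<longleftrightarrow> y div K = z div K \<and> y mod K = z mod K"
  by (metis div_mult_mod_eq)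

lemma kron_one: "kron_mat (1\<^sub>m a) (1\<^sub>m b) = 1\<^sub>m (a*b)"
proof (rule eq_matI)
  fix i j assume i: "i < dim_row (1\<^sub>m (a*b))" and j: "j < dim_col (1\<^sub>m (a*b))"
  then have i': "i < a*b" and j': "j < a*b" by simp_all
  have "(i = j) = (i div b = j div b \<and> i mod b = j mod b)" by (rule eq_divmod)
  then show "kron_mat (1\<^sub>m a) (1\<^sub>m b) $$ (i,j) = 1\<^sub>m (a*b) $$ (i,j)"
    using i' j' div_lt[OF i'] mod_lt[OF i'] div_lt[OF j'] mod_lt[OF j']
    by (auto simp: index_kron_mat)
qed simp_all

lemma kron_smult: "kron_mat (x \<cdot>\<^sub>m A) (y \<cdot>\<^sub>m B) = (x*y) \<cdot>\<^sub>m kron_mat A B"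
proof (rule eq_matI)
  fix i j assume i: "i < dim_row ((x*y) \<cdot>\<^sub>m kron_mat A B)" and j: "j < dim_col ((x*y) \<cdot>\<^sub>m kron_mat A B)"
  then have i': "i < dim_row A * dim_row B" and j': "j < dim_col A * dim_col B" by simp_all
  show "kron_mat (x \<cdot>\<^sub>m A) (y \<cdot>\<^sub>m B) $$ (i,j) = ((x*y) \<cdot>\<^sub>m kron_mat A B) $$ (i,j)"
    using i' j' div_lt[OF i'] mod_lt[OF i'] div_lt[OF j'] mod_lt[OF j']
    by (simp add: index_kron_mat)
qed simp_all

lemma card_split:
  fixes n k :: nat
  shows "card {j. j < n + k \<and> P j} = card {j. j < k \<and> P j} + card {j. j < n \<and> P (j + k)}"
proof -
  have "{j. j < n + k \<and> P j} = {j. j < k \<and> P j} \<union> (\<lambda>j. j + k) ` {j. j < n \<and> P (j + k)}"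
  proof -
    { fix x assume "x < n+k" "P x" "\<not> x < k"
      then have "x \<in> (\<lambda>j. j + k) ` {j. j < n \<and> P (j + k)}"
        by (intro image_eqI[of _ _ "x - k"]) auto }
    then show ?thesis by auto
  qed
  moreover have "{j. j < k \<and> P j} \<inter> (\<lambda>j. j + k) ` {j. j < n \<and> P (j + k)} = {}" by auto
  moreover have "card ((\<lambda>j. j + k) ` {j. j < n \<and> P (j + k)}) = card {j. j < n \<and> P (j + k)}"
    by (rule card_image) (simp add: inj_on_def)
  ultimately show ?thesis
    by (simp add: card_Un_disjoint)
qed

lemma bit_div_pow: "bit ((b::nat) div 2^k) j = bit b (j + k)"
  by (simp add: drop_bit_eq_div[symmetric] bit_drop_bit_eq add.commute)

lemma bit_mod_pow: "bit ((b::nat) mod 2^k) j = (j < k \<and> bit b j)"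
  by (simp add: take_bit_eq_mod[symmetric] bit_take_bit_iff)

lemma xor_div_pow: "(Bit_Operations.xor (x::nat) a) div 2^k = Bit_Operations.xor (x div 2^k) (a div 2^k)"
  by (simp add: drop_bit_eq_div[symmetric])

lemma xor_mod_pow: "(Bit_Operations.xor (x::nat) a) mod 2^k = Bit_Operations.xor (x mod 2^k) (a mod 2^k)"
  by (simp add: take_bit_eq_mod[symmetric])

lemma pauli_split:
  "pauli_op (n+k) a b = kron_mat (pauli_op n (a div 2^k) (b div 2^k)) (pauli_op k (a mod 2^k) (b mod 2^k))"
proof (rule eq_matI)
  fix y x assume y: "y < dim_row (kron_mat (pauli_op n (a div 2^k) (b div 2^k)) (pauli_op k (a mod 2^k) (b mod 2^k)))"
    and x: "x < dim_col (kron_mat (pauli_op n (a div 2^k) (b div 2^k)) (pauli_op k (a mod 2^k) (b mod 2^k)))"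
  then have y': "y < 2^n * 2^k" and x': "x < 2^n * 2^k" by (simp_all add: pauli_op_def)
  have eqv: "(y = Bit_Operations.xor x a) = (y div 2^k = Bit_Operations.xor (x div 2^k) (a div 2^k) \<and>
       y mod 2^k = Bit_Operations.xor (x mod 2^k) (a mod 2^k))"
    by (subst eq_divmod[of _ _ "2^k"]) (simp only: xor_div_pow xor_mod_pow)
  have s1: "{j. j < k \<and> bit (b mod 2^k) j \<and> bit (x mod 2^k) j} = {j. j < k \<and> bit b j \<and> bit x j}"
    by (auto simp: bit_mod_pow)
  have s2: "{j. j < n \<and> bit (b div 2^k) j \<and> bit (x div 2^k) j} = {j. j < n \<and> bit b (j+k) \<and> bit x (j+k)}"
    by (simp add: bit_div_pow)
  have c: "card {j. j < n + k \<and> bit b j \<and> bit x j} =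
     card {j. j < k \<and> bit (b mod 2^k) j \<and> bit (x mod 2^k) j} +
     card {j. j < n \<and> bit (b div 2^k) j \<and> bit (x div 2^k) j}"
    unfolding s1 s2 using card_split[of n k "\<lambda>j. bit b j \<and> bit x j"] by simp
  have L: "pauli_op (n+k) a b $$ (y,x) = (if y = Bit_Operations.xor x a then (-1) ^ card {j. j < n + k \<and> bit b j \<and> bit x j} else 0)"
    using y' x' by (simp add: pauli_op_def power_add)
  have R: "kron_mat (pauli_op n (a div 2^k) (b div 2^k)) (pauli_op k (a mod 2^k) (b mod 2^k)) $$ (y,x) =
     (if y div 2^k = Bit_Operations.xor (x div 2^k) (a div 2^k) then (-1) ^ card {j. j < n \<and> bit (b div 2^k) j \<and> bit (x div 2^k) j} else 0) *
     (if y mod 2^k = Bit_Operations.xor (x mod 2^k) (a mod 2^k) then (-1) ^ card {j. j < k \<and> bit (b mod 2^k) j \<and> bit (x mod 2^k) j} else 0)"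
    using y' x' div_lt[OF y'] mod_lt[OF y'] div_lt[OF x'] mod_lt[OF x']
    by (simp add: index_kron_mat pauli_op_def)
  show "pauli_op (n+k) a b $$ (y,x) = kron_mat (pauli_op n (a div 2^k) (b div 2^k)) (pauli_op k (a mod 2^k) (b mod 2^k)) $$ (y,x)"
    unfolding L R eqv c by (simp add: power_add)
qed (simp_all add: pauli_op_def power_add)




lemma smult_smult_mat: "a \<cdot>\<^sub>m (b \<cdot>\<^sub>m A) = (a * b :: complex) \<cdot>\<^sub>m A"
  by (rule eq_matI) auto

lemma pauli_carrier: "pauli_op n a b \<in> carrier_mat (2^n) (2^n)"
  unfolding pauli_op_def carrier_mat_def by auto

lemma dim_pauli[simp]: "dim_row (pauli_op n a b) = 2^n" "dim_col (pauli_op n a b) = 2^n"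
  by (simp_all add: pauli_op_def)

lemma pauli_group_carrier: "P \<in> pauli_group n \<Longrightarrow> P \<in> carrier_mat (2^n) (2^n)"
  unfolding pauli_group_def using pauli_carrier by auto

lemma pauli_groupI: "a < 2^n \<Longrightarrow> b < 2^n \<Longrightarrow> \<i> ^ k \<cdot>\<^sub>m pauli_op n a b \<in> pauli_group n"
  unfolding pauli_group_def by blast

lemma pauli_op_in_group: assumes "a < 2^n" "b < 2^n" shows "pauli_op n a b \<in> pauli_group n"
proof -
  have "1 \<cdot>\<^sub>m pauli_op n a b = pauli_op n a b" by (rule eq_matI) auto
  then show ?thesis using pauli_groupI[of a n b 0] assms by simp
qed

lemma clifford_carrier: "C \<in> clifford n \<Longrightarrow> C \<in> carrier_mat (2^n) (2^n)"
  unfolding clifford_def unitary_mat_def by auto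

lemma clifford_intro:
  assumes M: "M \<in> carrier_mat (2^n) (2^n)" and u1: "M * adj M = 1\<^sub>m (2^n)" and u2: "adj M * M = 1\<^sub>m (2^n)"
    and PP: "\<And>a b. a < 2^n \<Longrightarrow> b < 2^n \<Longrightarrow> M * pauli_op n a b * adj M \<in> pauli_group n"
  shows "M \<in> clifford n"
proof -
  have "M * P * adj M \<in> pauli_group n" if "P \<in> pauli_group n" for P
  proof -
    from that obtain k a b where P: "P = \<i> ^ k \<cdot>\<^sub>m pauli_op n a b" and a: "a < 2^n" and b: "b < 2^n"
      unfolding pauli_group_def by blast
    from PP[OF a b] obtain k' a' b' where Q: "M * pauli_op n a b * adj M = \<i> ^ k' \<cdot>\<^sub>m pauli_op n a' b'"
      and a': "a' < 2^n" and b': "b' < 2^n"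
      unfolding pauli_group_def by blast
    have A: "adj M \<in> carrier_mat (2^n) (2^n)" using adj_carrier[OF M] .
    have "M * P * adj M = \<i> ^ k \<cdot>\<^sub>m (M * pauli_op n a b * adj M)"
      unfolding P using M A pauli_carrier[of n a b]
      by (simp add: mult_smult_distrib mult_smult_assoc_mat[of _ "2^n" "2^n"])
    also have "\<dots> = \<i> ^ (k + k') \<cdot>\<^sub>m pauli_op n a' b'"
      unfolding Q by (simp add: smult_smult_mat power_add)
    finally show ?thesis using a' b' by (simp add: pauli_groupI)
  qed
  then show ?thesis
    unfolding clifford_def unitary_mat_def using M u1 u2 by blast
qed

lemma clifford_one: "1\<^sub>m (2^n) \<in> clifford n"
  by (rule clifford_intro) (auto simp: pauli_op_in_group pauli_carrier)

lemma clifford_mult: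
  assumes C: "C \<in> clifford n" and D: "D \<in> clifford n"
  shows "C * D \<in> clifford n"
proof -
  let ?N = "2^n :: nat"
  have Cc: "C \<in> carrier_mat ?N ?N" and Dc: "D \<in> carrier_mat ?N ?N"
    using C D by (simp_all add: clifford_carrier)
  have Ca: "adj C \<in> carrier_mat ?N ?N" and Da: "adj D \<in> carrier_mat ?N ?N"
    using adj_carrier Cc Dc by blast+
  have uC: "C * adj C = 1\<^sub>m ?N" "adj C * C = 1\<^sub>m ?N" using C unfolding clifford_def unitary_mat_def by auto
  have uD: "D * adj D = 1\<^sub>m ?N" "adj D * D = 1\<^sub>m ?N" using D unfolding clifford_def unitary_mat_def by auto
  have adjCD: "adj (C * D) = adj D * adj C" by (rule adj_mult[OF Cc Dc])
  show ?thesis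
  proof (rule clifford_intro)
    show "C * D \<in> carrier_mat ?N ?N" using Cc Dc by simp
    have "C * D * adj (C * D) = C * (D * adj D) * adj C"
      unfolding adjCD using Cc Dc Ca Da by (simp add: assoc_mult_mat[of _ ?N ?N _ ?N _ ?N])
    then show "C * D * adj (C * D) = 1\<^sub>m ?N" using uC uD Cc by simp
    have "adj (C * D) * (C * D) = adj D * (adj C * C) * D"
      unfolding adjCD using Cc Dc Ca Da by (simp add: assoc_mult_mat[of _ ?N ?N _ ?N _ ?N])
    then show "adj (C * D) * (C * D) = 1\<^sub>m ?N" using uC uD Dc by simp
    fix a b :: nat assume a: "a < 2^n" and b: "b < 2^n"
    have Pc: "pauli_op n a b \<in> carrier_mat ?N ?N" by (rule pauli_carrier)
    have "D * pauli_op n a b * adj D \<in> pauli_group n"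
      using D pauli_op_in_group[OF a b] unfolding clifford_def by blast
    then have "C * (D * pauli_op n a b * adj D) * adj C \<in> pauli_group n"
      using C unfolding clifford_def by blast
    moreover have "C * D * pauli_op n a b * adj (C * D) = C * (D * pauli_op n a b * adj D) * adj C"
      unfolding adjCD using Cc Dc Ca Da Pc by (simp add: assoc_mult_mat[of _ ?N ?N _ ?N _ ?N])
    ultimately show "C * D * pauli_op n a b * adj (C * D) \<in> pauli_group n" by simp
  qed
qed

lemma clifford_kron:
  assumes C: "C \<in> clifford n" and D: "D \<in> clifford k"
  shows "kron_mat C D \<in> clifford (n + k)"
proof -
  let ?N = "2^n :: nat" and ?K = "2^k :: nat"
  have Cc: "C \<in> carrier_mat ?N ?N" and Dc: "D \<in> carrier_mat ?K ?K"
    using C D by (simp_all add: clifford_carrier)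
  have Ca: "adj C \<in> carrier_mat ?N ?N" and Da: "adj D \<in> carrier_mat ?K ?K"
    using adj_carrier Cc Dc by blast+
  have uC: "C * adj C = 1\<^sub>m ?N" "adj C * C = 1\<^sub>m ?N" using C unfolding clifford_def unitary_mat_def by auto
  have uD: "D * adj D = 1\<^sub>m ?K" "adj D * D = 1\<^sub>m ?K" using D unfolding clifford_def unitary_mat_def by auto
  have pw: "(2::nat)^(n+k) = ?N * ?K" by (simp add: power_add)
  show ?thesis
  proof (rule clifford_intro)
    show "kron_mat C D \<in> carrier_mat (2^(n+k)) (2^(n+k))" unfolding pw by (rule kron_mat_carrier[OF Cc Dc])
    show "kron_mat C D * adj (kron_mat C D) = 1\<^sub>m (2^(n+k))"
      unfolding adj_kron pw kron_mult[OF Cc Dc Ca Da] uC uD kron_one ..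
    show "adj (kron_mat C D) * kron_mat C D = 1\<^sub>m (2^(n+k))"
      unfolding adj_kron pw kron_mult[OF Ca Da Cc Dc] uC uD kron_one ..
    fix a b :: nat assume a: "a < 2^(n+k)" and b: "b < 2^(n+k)"
    have a1: "a div ?K < ?N" and b1: "b div ?K < ?N" using a b pw div_lt by metis+
    have a2: "a mod ?K < ?K" and b2: "b mod ?K < ?K" by simp_all
    let ?P1 = "pauli_op n (a div ?K) (b div ?K)" and ?P2 = "pauli_op k (a mod ?K) (b mod ?K)"
    have "C * ?P1 * adj C \<in> pauli_group n"
      using C pauli_op_in_group[OF a1 b1] unfolding clifford_def by blast
    then obtain j1 a1' b1' where Q1: "C * ?P1 * adj C = \<i> ^ j1 \<cdot>\<^sub>m pauli_op n a1' b1'"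
      and a1': "a1' < ?N" and b1': "b1' < ?N" unfolding pauli_group_def by blast
    have "D * ?P2 * adj D \<in> pauli_group k"
      using D pauli_op_in_group[OF a2 b2] unfolding clifford_def by blast
    then obtain j2 a2' b2' where Q2: "D * ?P2 * adj D = \<i> ^ j2 \<cdot>\<^sub>m pauli_op k a2' b2'"
      and a2': "a2' < ?K" and b2': "b2' < ?K" unfolding pauli_group_def by blast
    have P1c: "?P1 \<in> carrier_mat ?N ?N" and P2c: "?P2 \<in> carrier_mat ?K ?K" by (rule pauli_carrier)+
    have "kron_mat C D * pauli_op (n+k) a b * adj (kron_mat C D) =
          kron_mat C D * kron_mat ?P1 ?P2 * kron_mat (adj C) (adj D)"
      by (simp add: pauli_split adj_kron)
    also have "\<dots> = kron_mat (C * ?P1 * adj C) (D * ?P2 * adj D)"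
      using Cc Dc Ca Da P1c P2c
      by (simp add: kron_mult[OF Cc Dc P1c P2c] kron_mult[of _ ?N ?N _ ?K ?K _ ?N _ ?K])
    also have "\<dots> = (\<i> ^ j1 * \<i> ^ j2) \<cdot>\<^sub>m kron_mat (pauli_op n a1' b1') (pauli_op k a2' b2')"
      unfolding Q1 Q2 kron_smult ..
    also have "kron_mat (pauli_op n a1' b1') (pauli_op k a2' b2') = pauli_op (n+k) (a1' * ?K + a2') (b1' * ?K + b2')"
      using pauli_split[of n k "a1' * ?K + a2'" "b1' * ?K + b2'"] a2' b2' by (simp add: divmod_simps)
    finally have "kron_mat C D * pauli_op (n+k) a b * adj (kron_mat C D) =
        \<i> ^ (j1 + j2) \<cdot>\<^sub>m pauli_op (n+k) (a1' * ?K + a2') (b1' * ?K + b2')"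
      by (simp add: power_add)
    moreover have "a1' * ?K + a2' < 2^(n+k)" "b1' * ?K + b2' < 2^(n+k)"
      unfolding pw using idx_lt a1' a2' b1' b2' by auto
    ultimately show "kron_mat C D * pauli_op (n+k) a b * adj (kron_mat C D) \<in> pauli_group (n+k)"
      by (simp add: pauli_groupI)
  qed
qed

lemma stab_intro: "C \<in> clifford n \<Longrightarrow> C *\<^sub>v unit_vec (2^n) 0 \<in> stabilizer_states n"
  unfolding stabilizer_states_def by blast

lemma stab_dim: "s \<in> stabilizer_states n \<Longrightarrow> dim_vec s = 2^n"
  unfolding stabilizer_states_def using clifford_carrier by fastforce

lemma stab_apply:
  assumes G: "G \<in> clifford n" and s: "s \<in> stabilizer_states n"
  shows "G *\<^sub>v s \<in> stabilizer_states n"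
proof -
  from s obtain C where C: "C \<in> clifford n" and s': "s = C *\<^sub>v unit_vec (2^n) 0"
    unfolding stabilizer_states_def by blast
  have "G *\<^sub>v s = (G * C) *\<^sub>v unit_vec (2^n) 0"
    unfolding s' using clifford_carrier[OF G] clifford_carrier[OF C]
    by (simp add: assoc_mult_mat_vec[of _ "2^n" "2^n" _ "2^n"])
  then show ?thesis using stab_intro[OF clifford_mult[OF G C]] by simp
qed

lemma kron_e0: "kron_vec (unit_vec (2^n) 0) (unit_vec (2^k) 0) = unit_vec (2^(n+k)) 0"
proof (rule eq_vecI)
  fix i assume i: "i < dim_vec (unit_vec (2^(n+k)) 0)"
  then have i': "i < 2^n * 2^k" by (simp add: power_add)
  have "(i = 0) = (i div 2^k = 0 \<and> i mod 2^k = 0)"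
    using eq_divmod[of i 0 "2^k"] by simp
  then show "kron_vec (unit_vec (2^n) 0) (unit_vec (2^k) 0) $ i = unit_vec (2^(n+k)) 0 $ i"
    using i' div_lt[OF i'] by (simp add: index_kron_vec power_add)
qed (simp add: power_add)

lemma stab_kron:
  assumes s: "s \<in> stabilizer_states n" and t: "t \<in> stabilizer_states k"
  shows "kron_vec s t \<in> stabilizer_states (n+k)"
proof -
  from s obtain C where C: "C \<in> clifford n" and s': "s = C *\<^sub>v unit_vec (2^n) 0"
    unfolding stabilizer_states_def by blast
  from t obtain D where D: "D \<in> clifford k" and t': "t = D *\<^sub>v unit_vec (2^k) 0"
    unfolding stabilizer_states_def by blast
  have "kron_vec s t = kron_mat C D *\<^sub>v unit_vec (2^(n+k)) 0"
    unfolding s' t' kron_e0[symmetric]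
    using kron_mult_vec[OF clifford_carrier[OF C] clifford_carrier[OF D]] by simp
  then show ?thesis using stab_intro[OF clifford_kron[OF C D]] by simp
qed




definition dec :: "nat \<Rightarrow> nat \<Rightarrow> complex vec \<Rightarrow> bool" where
  "dec n k \<psi> \<longleftrightarrow> (\<exists>(c :: nat \<Rightarrow> complex) (\<Phi> :: nat \<Rightarrow> complex vec).
      (\<forall>i<k. \<Phi> i \<in> stabilizer_states n) \<and>
      \<psi> = vec (2^n) (\<lambda>x. \<Sum>i<k. c i * (\<Phi> i $ x)))"

lemma dec_rank: "dec n k \<psi> \<Longrightarrow> stabilizer_rank n \<psi> \<le> k"
  unfolding stabilizer_rank_def dec_def by (rule Least_le)

lemma e0_stab: "unit_vec (2^n) 0 \<in> stabilizer_states n"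
  using stab_intro[OF clifford_one[of n]] by simp

lemma dec_mono:
  assumes d: "dec n k \<psi>" and kk: "k \<le> k'"
  shows "dec n k' \<psi>"
proof -
  from d obtain c \<Phi> where st: "\<forall>i<k. \<Phi> i \<in> stabilizer_states n"
    and eq: "\<psi> = vec (2^n) (\<lambda>x. \<Sum>i<k. c i * (\<Phi> i $ x))" unfolding dec_def by blast
  define c' where "c' i = (if i < k then c i else 0)" for i
  define \<Phi>' where "\<Phi>' i = (if i < k then \<Phi> i else unit_vec (2^n) 0)" for i
  have "(\<Sum>i<k'. c' i * (\<Phi>' i $ x)) = (\<Sum>i<k. c i * (\<Phi> i $ x))" for x
  proof -
    have "(\<Sum>i<k'. c' i * (\<Phi>' i $ x)) = (\<Sum>i<k+(k'-k). c' i * (\<Phi>' i $ x))" using kk by simp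
    also have "\<dots> = (\<Sum>i<k. c' i * (\<Phi>' i $ x)) + (\<Sum>i<k'-k. c' (k+i) * (\<Phi>' (k+i) $ x))"
      by (rule sum_split_add)
    also have "\<dots> = (\<Sum>i<k. c i * (\<Phi> i $ x))" by (simp add: c'_def \<Phi>'_def)
    finally show ?thesis .
  qed
  moreover have "\<forall>i<k'. \<Phi>' i \<in> stabilizer_states n" using st e0_stab by (simp add: \<Phi>'_def)
  ultimately show ?thesis unfolding dec_def eq
    by (intro exI[of _ c'] exI[of _ \<Phi>']) auto
qed

lemma dec_vec_index:
  assumes "dec n k \<psi>"
  shows "dim_vec \<psi> = 2^n"
  using assms unfolding dec_def by auto

lemma dec_lin:
  assumes du: "dec n k u" and dv: "dec n k' v"
  shows "dec n (k+k') (vec (2^n) (\<lambda>x. a * u $ x + b * v $ x))"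
proof -
  from du obtain c \<Phi> where st1: "\<forall>i<k. \<Phi> i \<in> stabilizer_states n"
    and eq1: "u = vec (2^n) (\<lambda>x. \<Sum>i<k. c i * (\<Phi> i $ x))" unfolding dec_def by blast
  from dv obtain d \<Psi> where st2: "\<forall>i<k'. \<Psi> i \<in> stabilizer_states n"
    and eq2: "v = vec (2^n) (\<lambda>x. \<Sum>i<k'. d i * (\<Psi> i $ x))" unfolding dec_def by blast
  define c' where "c' i = (if i < k then a * c i else b * d (i - k))" for i
  define \<Phi>' where "\<Phi>' i = (if i < k then \<Phi> i else \<Psi> (i - k))" for i
  have "(\<Sum>i<k+k'. c' i * (\<Phi>' i $ x)) = a * u $ x + b * v $ x" if x: "x < 2^n" for x
  proof -
    have "(\<Sum>i<k+k'. c' i * (\<Phi>' i $ x)) = (\<Sum>i<k. c' i * (\<Phi>' i $ x)) + (\<Sum>i<k'. c' (k+i) * (\<Phi>' (k+i) $ x))"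
      by (rule sum_split_add)
    also have "\<dots> = a * (\<Sum>i<k. c i * (\<Phi> i $ x)) + b * (\<Sum>i<k'. d i * (\<Psi> i $ x))"
      by (simp add: c'_def \<Phi>'_def sum_distrib_left mult.assoc)
    also have "\<dots> = a * u $ x + b * v $ x" using x by (simp add: eq1 eq2)
    finally show ?thesis .
  qed
  moreover have "\<forall>i<k+k'. \<Phi>' i \<in> stabilizer_states n" using st1 st2 by (simp add: \<Phi>'_def)
  ultimately show ?thesis unfolding dec_def
    by (intro exI[of _ c'] exI[of _ \<Phi>']) auto
qed

lemma dec_apply:
  assumes G: "G \<in> clifford n" and du: "dec n k u"
  shows "dec n k (G *\<^sub>v u)"
proof -
  from du obtain c \<Phi> where st: "\<forall>i<k. \<Phi> i \<in> stabilizer_states n"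
    and eq: "u = vec (2^n) (\<lambda>x. \<Sum>i<k. c i * (\<Phi> i $ x))" unfolding dec_def by blast
  have Gc: "G \<in> carrier_mat (2^n) (2^n)" by (rule clifford_carrier[OF G])
  have dims: "dim_vec (\<Phi> i) = 2^n" if "i < k" for i using st that stab_dim by blast
  have "(G *\<^sub>v u) $ y = (\<Sum>i<k. c i * ((G *\<^sub>v \<Phi> i) $ y))" if y: "y < 2^n" for y
  proof -
    have "(G *\<^sub>v u) $ y = (\<Sum>x<2^n. G $$ (y,x) * (\<Sum>i<k. c i * (\<Phi> i $ x)))"
      using Gc y by (simp add: eq scalar_prod_def atLeast0LessThan)
    also have "\<dots> = (\<Sum>i<k. c i * (\<Sum>x<2^n. G $$ (y,x) * (\<Phi> i $ x)))"
      by (simp add: sum_distrib_left sum_distrib_right mult_ac sum.swap[of _ "{..<k}"])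
    also have "\<dots> = (\<Sum>i<k. c i * ((G *\<^sub>v \<Phi> i) $ y))"
      using Gc y dims by (intro sum.cong refl) (simp add: scalar_prod_def atLeast0LessThan)
    finally show ?thesis .
  qed
  moreover have "dim_vec (G *\<^sub>v u) = 2^n" using Gc by simp
  moreover have "\<forall>i<k. G *\<^sub>v \<Phi> i \<in> stabilizer_states n" using st stab_apply[OF G] by blast
  ultimately show ?thesis unfolding dec_def
    by (intro exI[of _ c] exI[of _ "\<lambda>i. G *\<^sub>v \<Phi> i"]) (auto intro!: eq_vecI)
qed

lemma dec_kron:
  assumes du: "dec n k u" and dv: "dec m l v"
  shows "dec (n+m) (k*l) (kron_vec u v)"
proof -
  from du obtain c \<Phi> where st1: "\<forall>i<k. \<Phi> i \<in> stabilizer_states n"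
    and eq1: "u = vec (2^n) (\<lambda>x. \<Sum>i<k. c i * (\<Phi> i $ x))" unfolding dec_def by blast
  from dv obtain d \<Psi> where st2: "\<forall>i<l. \<Psi> i \<in> stabilizer_states m"
    and eq2: "v = vec (2^m) (\<lambda>x. \<Sum>i<l. d i * (\<Psi> i $ x))" unfolding dec_def by blast
  define c' where "c' t = c (t div l) * d (t mod l)" for t
  define \<Phi>' where "\<Phi>' t = kron_vec (\<Phi> (t div l)) (\<Psi> (t mod l))" for t
  have dims1: "dim_vec (\<Phi> i) = 2^n" if "i < k" for i using st1 that stab_dim by blast
  have dims2: "dim_vec (\<Psi> i) = 2^m" if "i < l" for i using st2 that stab_dim by blast
  have "kron_vec u v $ x = (\<Sum>t<k*l. c' t * (\<Phi>' t $ x))" if x: "x < 2^(n+m)" for x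
  proof -
    have x': "x < 2^n * 2^m" using x by (simp add: power_add)
    have "kron_vec u v $ x = (\<Sum>i<k. c i * (\<Phi> i $ (x div 2^m))) * (\<Sum>j<l. d j * (\<Psi> j $ (x mod 2^m)))"
      using x' div_lt[OF x'] by (simp add: index_kron_vec eq1 eq2)
    also have "\<dots> = (\<Sum>i<k. \<Sum>j<l. c' (i*l+j) * (\<Phi>' (i*l+j) $ x))"
      unfolding sum_product
    proof (intro sum.cong refl)
      fix i j assume i: "i \<in> {..<k}" and j: "j \<in> {..<l}"
      have "\<Phi>' (i*l+j) $ x = \<Phi> i $ (x div 2^m) * \<Psi> j $ (x mod 2^m)"
        using i j x' dims1 dims2 by (simp add: \<Phi>'_def divmod_simps index_kron_vec)
      then show "c i * (\<Phi> i $ (x div 2^m)) * (d j * (\<Psi> j $ (x mod 2^m))) = c' (i*l+j) * (\<Phi>' (i*l+j) $ x)"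
        using j by (simp add: c'_def divmod_simps)
    qed
    also have "\<dots> = (\<Sum>t<k*l. c' t * (\<Phi>' t $ x))" by (rule sum_split_mult[symmetric])
    finally show ?thesis .
  qed
  moreover have "dim_vec (kron_vec u v) = 2^(n+m)" by (simp add: eq1 eq2 power_add)
  moreover have "\<forall>t<k*l. \<Phi>' t \<in> stabilizer_states (n+m)"
  proof (intro allI impI)
    fix t assume t: "t < k*l"
    then show "\<Phi>' t \<in> stabilizer_states (n+m)"
      unfolding \<Phi>'_def using st1 st2 div_lt[OF t] mod_lt[OF t] by (simp add: stab_kron)
  qed
  ultimately show ?thesis unfolding dec_def
    by (intro exI[of _ c'] exI[of _ \<Phi>']) (auto intro!: eq_vecI)
qed




lemma card_lt_sum: fixes n :: nat shows "card {j. j < n \<and> P j} = (\<Sum>j<n. if P j then 1 else 0)"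
proof (induction n)
  case 0 then show ?case by simp
next
  case (Suc n)
  have "{j. j < Suc n \<and> P j} = {j. j < n \<and> P j} \<union> (if P n then {n} else {})"
    by (auto simp: less_Suc_eq)
  then show ?case using Suc by (simp add: card_Un_disjoint)
qed

lemma pauli_index: "y < 2^n \<Longrightarrow> x < 2^n \<Longrightarrow> pauli_op n a b $$ (y,x) =
  (if y = Bit_Operations.xor x a then (-1) ^ (\<Sum>j<n. if bit b j \<and> bit x j then 1 else 0) else 0)"
  by (simp add: pauli_op_def card_lt_sum)

lemma less2: "(i::nat) < 2 \<Longrightarrow> i = 0 \<or> i = 1" by auto

lemma mat2_eqI:
  assumes "f (0,0) = g (0,0)" "f (0,1) = g (0,1)" "f (1,0) = g (1,0)" "f (1,1) = g (1,1)"
  shows "mat 2 2 f = mat 2 2 g"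
  by (rule cong_mat) (use assms in \<open>auto dest!: less2\<close>)

lemma mat2_mult: "mat 2 2 f * mat 2 2 g = mat 2 2 (\<lambda>(i,j). f (i,0) * g (0,j) + f (i,1) * g (1,j))"
  by (rule eq_matI) (auto simp: scalar_prod_def eval_nat_numeral)

lemma mat2_adj: "adj (mat 2 2 f) = mat 2 2 (\<lambda>(i,j). cnj (f (j,i)))"
  by (rule eq_matI) (auto simp: adj_def)

lemma mat2_smult: "c \<cdot>\<^sub>m mat 2 2 f = mat 2 2 (\<lambda>ij. c * f ij)"
  by (rule eq_matI) auto

lemma one2: "1\<^sub>m 2 = mat 2 2 (\<lambda>(i,j). if i = j then 1 else 0)"
  by (rule eq_matI) auto

definition Xm :: "complex mat" where "Xm = mat 2 2 (\<lambda>(i,j). if i = j then 0 else 1)"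
definition Zm :: "complex mat" where "Zm = mat 2 2 (\<lambda>(i,j). if i = j then (if i = 0 then 1 else -1) else 0)"
definition Ym :: "complex mat" where "Ym = mat 2 2 (\<lambda>(i,j). if i = j then 0 else (if j = 0 then 1 else -1))"
definition hc :: complex where "hc = 1 / complex_of_real (sqrt 2)"
definition Hm :: "complex mat" where "Hm = mat 2 2 (\<lambda>(i,j). if i = 1 \<and> j = 1 then - hc else hc)"

lemma hc_sq: "hc * hc = 1/2"
proof -
  have "complex_of_real (sqrt 2) * complex_of_real (sqrt 2) = complex_of_real (sqrt 2 * sqrt 2)"
    by (rule of_real_mult[symmetric])
  also have "\<dots> = 2" by simp
  finally have "complex_of_real (sqrt 2) * complex_of_real (sqrt 2) = 2" .
  then show ?thesis unfolding hc_def by (simp add: field_simps)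
qed

lemma cnj_hc[simp]: "cnj hc = hc" by (simp add: hc_def)

lemma pauli1:
  "pauli_op 1 0 0 = mat 2 2 (\<lambda>(i,j). if i = j then 1 else 0)"
  "pauli_op 1 1 0 = Xm" "pauli_op 1 0 1 = Zm" "pauli_op 1 1 1 = Ym"
  unfolding Xm_def Zm_def Ym_def
  by (rule eq_matI; auto simp: pauli_index bit_0 dest!: less2)+

lemma pauli1_cases:
  assumes "a < 2^1" "b < 2^1"
  shows "pauli_op 1 a b \<in> {mat 2 2 (\<lambda>(i,j). if i = j then 1 else 0), Xm, Zm, Ym}"
  using assms pauli1 by (auto dest!: less2)

lemma pg1:
  "mat 2 2 (\<lambda>(i,j). if i = j then 1 else 0) \<in> pauli_group 1"
  "Xm \<in> pauli_group 1" "Zm \<in> pauli_group 1" "Ym \<in> pauli_group 1"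
  "- Xm \<in> pauli_group 1" "- Zm \<in> pauli_group 1" "- Ym \<in> pauli_group 1"
proof -
  have m: "- A = \<i> ^ 2 \<cdot>\<^sub>m A" for A :: "complex mat" by (rule eq_matI) auto
  have A: "pauli_op 1 0 0 \<in> pauli_group 1" "pauli_op 1 1 0 \<in> pauli_group 1"
    "pauli_op 1 0 1 \<in> pauli_group 1" "pauli_op 1 1 1 \<in> pauli_group 1"
    by (rule pauli_op_in_group; simp)+
  then show "mat 2 2 (\<lambda>(i,j). if i = j then 1 else 0) \<in> pauli_group 1"
    "Xm \<in> pauli_group 1" "Zm \<in> pauli_group 1" "Ym \<in> pauli_group 1"
    unfolding pauli1 .
  have B: "\<i>^2 \<cdot>\<^sub>m pauli_op 1 1 0 \<in> pauli_group 1" "\<i>^2 \<cdot>\<^sub>m pauli_op 1 0 1 \<in> pauli_group 1"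
    "\<i>^2 \<cdot>\<^sub>m pauli_op 1 1 1 \<in> pauli_group 1"
    by (rule pauli_groupI; simp)+
  then show "- Xm \<in> pauli_group 1" "- Zm \<in> pauli_group 1" "- Ym \<in> pauli_group 1"
    unfolding pauli1 m[symmetric] .
qed

lemma neg_mat2: "- mat 2 2 f = mat 2 2 (\<lambda>ij. - f ij)"
  by (rule eq_matI) auto

lemma clifford1_intro:
  assumes M: "M = mat 2 2 f"
    and u1: "M * adj M = 1\<^sub>m 2" and u2: "adj M * M = 1\<^sub>m 2"
    and cx: "M * Xm * adj M \<in> pauli_group 1" and cz: "M * Zm * adj M \<in> pauli_group 1"
    and cy: "M * Ym * adj M \<in> pauli_group 1"
  shows "M \<in> clifford 1"
proof (rule clifford_intro)
  show "M \<in> carrier_mat (2^1) (2^1)" unfolding M by simp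
  show "M * adj M = 1\<^sub>m (2^1)" "adj M * M = 1\<^sub>m (2^1)" using u1 u2 by simp_all
  fix a b :: nat assume "a < 2^1" "b < 2^1"
  then have "pauli_op 1 a b \<in> {mat 2 2 (\<lambda>(i,j). if i = j then 1 else 0), Xm, Zm, Ym}" by (rule pauli1_cases)
  moreover have "M * mat 2 2 (\<lambda>(i,j). if i = j then 1 else 0) * adj M \<in> pauli_group 1"
  proof -
    have "M * mat 2 2 (\<lambda>(i,j). if i = j then 1 else 0) = M" unfolding M by (simp add: one2[symmetric])
    then show ?thesis using u1 pg1(1) by (simp add: one2)
  qed
  ultimately show "M * pauli_op 1 a b * adj M \<in> pauli_group 1" using cx cy cz by auto
qed

lemma hc_sq2: "hc * (hc * x) = x / 2" using hc_sq by (metis divide_inverse_commute inverse_eq_divide mult.assoc mult.commute mult_1)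

lemmas m2simps = Xm_def Zm_def Ym_def Hm_def mat2_mult mat2_adj neg_mat2 one2 hc_sq hc_sq2

lemma X_conj: "Xm * Xm * adj Xm = Xm" "Xm * Zm * adj Xm = - Zm" "Xm * Ym * adj Xm = - Ym"
  "Xm * adj Xm = 1\<^sub>m 2" "adj Xm * Xm = 1\<^sub>m 2"
  by (simp add: m2simps, rule mat2_eqI, simp_all)+

lemma Z_conj: "Zm * Xm * adj Zm = - Xm" "Zm * Zm * adj Zm = Zm" "Zm * Ym * adj Zm = - Ym"
  "Zm * adj Zm = 1\<^sub>m 2" "adj Zm * Zm = 1\<^sub>m 2"
  by (simp add: m2simps, rule mat2_eqI, simp_all)+

lemma H_conj1: "Hm * Xm * adj Hm = Zm"
  by (simp add: m2simps; rule mat2_eqI; simp add: m2simps)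

lemma H_conj2: "Hm * Zm * adj Hm = Xm"
  by (simp add: m2simps; rule mat2_eqI; simp add: m2simps)

lemma H_conj3: "Hm * Ym * adj Hm = - Ym"
  by (simp add: m2simps; rule mat2_eqI; simp add: m2simps)

lemma H_conj4: "Hm * adj Hm = 1\<^sub>m 2"
  by (simp add: m2simps; rule mat2_eqI; simp add: m2simps)

lemma H_conj5: "adj Hm * Hm = 1\<^sub>m 2"
  by (simp add: m2simps; rule mat2_eqI; simp add: m2simps)

lemmas H_conj = H_conj1 H_conj2 H_conj3 H_conj4 H_conj5

lemma X_cliff: "Xm \<in> clifford 1"
  by (rule clifford1_intro[OF Xm_def]) (simp_all only: X_conj pg1)

lemma Z_cliff: "Zm \<in> clifford 1"
  by (rule clifford1_intro[OF Zm_def]) (simp_all only: Z_conj pg1)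

lemma H_cliff: "Hm \<in> clifford 1"
  by (rule clifford1_intro[OF Hm_def]) (simp_all only: H_conj pg1)




lemma all8: "(\<forall>x<(8::nat). P x) = (P 0 \<and> P 1 \<and> P 2 \<and> P 3 \<and> P 4 \<and> P 5 \<and> P 6 \<and> P 7)"
proof -
  have "{..<(8::nat)} = {0,1,2,3,4,5,6,7}" by (auto simp: lessThan_def)
  then have "(\<forall>x<(8::nat). P x) = (\<forall>x\<in>{0,1,2,3,4,5,6,7}. P x)" by (metis lessThan_iff)
  then show ?thesis by simp
qed

definition fE :: "nat \<Rightarrow> nat" where "fE x = (if x < 4 then x else Bit_Operations.xor x 3)"
definition gE :: "nat \<Rightarrow> nat" where "gE b = (if b mod 4 = 1 \<or> b mod 4 = 2 then Bit_Operations.xor b 4 else b)"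
definition Em :: "complex mat" where "Em = mat 8 8 (\<lambda>(y,x). if y = fE x then 1 else 0)"

lemma sum3: "(\<Sum>j<(3::nat). f j) = f 0 + f 1 + f 2" by (simp add: eval_nat_numeral)

lemma fE_facts: "\<forall>x<8. fE x < 8 \<and> fE (fE x) = x"
  by (simp add: all8 fE_def)

lemma fE_xor: "\<forall>z<8. \<forall>a<8. Bit_Operations.xor (fE z) a = fE (Bit_Operations.xor z (fE a)) \<and> Bit_Operations.xor z (fE a) < 8"
  by (simp add: all8 fE_def)

lemma gE_lt: "\<forall>b<8. gE b < 8"
  by (simp add: all8 gE_def)

lemma gE_sign: "\<forall>b<8. \<forall>z<8. (-1::complex) ^ (\<Sum>j<3. if bit b j \<and> bit (fE z) j then 1 else 0) =
    (-1) ^ (\<Sum>j<3. if bit (gE b) j \<and> bit z j then 1 else 0)"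
  by (simp add: all8 fE_def gE_def sum3 bit_0)

lemma fE_inv: "x < 8 \<Longrightarrow> fE (fE x) = x" and fE_lt: "x < 8 \<Longrightarrow> fE x < 8"
  using fE_facts by auto

lemma fE_inj: "x < 8 \<Longrightarrow> y < 8 \<Longrightarrow> (fE x = fE y) = (x = y)"
  by (metis fE_inv)

lemma perm_conj:
  assumes f: "\<forall>x<N. f x < N \<and> f (f x) = x" and M: "M \<in> carrier_mat N N"
  shows "mat N N (\<lambda>(y,x). if y = f x then 1 else 0) * M * adj (mat N N (\<lambda>(y,x). if y = f x then 1 else 0))
       = mat N N (\<lambda>(y,z). M $$ (f y, f z))"
proof -
  let ?P = "mat N N (\<lambda>(y,x). if y = f x then 1 else 0) :: complex mat"
  have iff: "(y = f k) = (k = f y)" if "y < N" "k < N" for y k using f that by metis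
  have adjP: "adj ?P = ?P"
    by (rule eq_matI) (auto simp: index_adj iff)
  have PM: "?P * M = mat N N (\<lambda>(y,l). M $$ (f y, l))"
  proof (rule eq_matI)
    fix y l assume y: "y < dim_row (mat N N (\<lambda>(y,l). M $$ (f y, l)))" and l: "l < dim_col (mat N N (\<lambda>(y,l). M $$ (f y, l)))"
    then have y': "y < N" and l': "l < N" by simp_all
    have "(?P * M) $$ (y,l) = (\<Sum>k<N. (if k = f y then 1 else 0) * M $$ (k,l))"
      using M y' l' by (auto simp: scalar_prod_def atLeast0LessThan iff intro!: sum.cong)
    also have "\<dots> = M $$ (f y, l)" using f y' by (simp add: if_distrib[of "\<lambda>t. t * _"] cong: if_cong)
    finally show "(?P * M) $$ (y,l) = mat N N (\<lambda>(y,l). M $$ (f y, l)) $$ (y,l)" using y' l' by simp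
  qed (use M in auto)
  show ?thesis
  proof (rule eq_matI)
    fix y z assume y: "y < dim_row (mat N N (\<lambda>(y,z). M $$ (f y, f z)))" and z: "z < dim_col (mat N N (\<lambda>(y,z). M $$ (f y, f z)))"
    then have y': "y < N" and z': "z < N" by simp_all
    have "(?P * M * adj ?P) $$ (y,z) = (\<Sum>l<N. M $$ (f y, l) * (if l = f z then 1 else 0))"
      unfolding adjP PM using y' z' by (auto simp: scalar_prod_def atLeast0LessThan iff intro!: sum.cong)
    also have "\<dots> = M $$ (f y, f z)" using f z' by (simp add: if_distrib[of "\<lambda>t. _ * t"] cong: if_cong)
    finally show "(?P * M * adj ?P) $$ (y,z) = mat N N (\<lambda>(y,z). M $$ (f y, f z)) $$ (y,z)" using y' z' by simp
  qed (use M in auto)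
qed

lemma E_cliff: "Em \<in> clifford 3"
proof (rule clifford_intro)
  have f: "\<forall>x<8. fE x < 8 \<and> fE (fE x) = x" by (rule fE_facts)
  show Ec: "Em \<in> carrier_mat (2^3) (2^3)" unfolding Em_def by simp
  have adjE: "adj Em = Em"
    unfolding Em_def by (rule eq_matI) (auto simp: index_adj fE_inv)
  have one: "Em * 1\<^sub>m 8 * adj Em = 1\<^sub>m 8"
    unfolding Em_def using perm_conj[OF f, of "1\<^sub>m 8"]
    by (auto intro!: eq_matI simp: fE_lt fE_inj)
  show "Em * adj Em = 1\<^sub>m (2^3)" using one Ec by simp
  show "adj Em * Em = 1\<^sub>m (2^3)" using one Ec adjE by simp
  fix a b :: nat assume a: "a < 2^3" and b: "b < 2^3"
  have "Em * pauli_op 3 a b * adj Em = pauli_op 3 (fE a) (gE b)"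
  proof -
    have "Em * pauli_op 3 a b * adj Em = mat 8 8 (\<lambda>(y,z). pauli_op 3 a b $$ (fE y, fE z))"
      unfolding Em_def by (rule perm_conj[OF f]) (use pauli_carrier[of 3 a b] in simp)
    also have "\<dots> = pauli_op 3 (fE a) (gE b)"
    proof (rule eq_matI)
      fix y z assume "y < dim_row (pauli_op 3 (fE a) (gE b))" "z < dim_col (pauli_op 3 (fE a) (gE b))"
      then have y: "y < 8" and z: "z < 8" by simp_all
      have fy: "fE y < 8" and fz: "fE z < 8" using f y z by auto
      have x1: "Bit_Operations.xor (fE z) a = fE (Bit_Operations.xor z (fE a))"
        and x2: "Bit_Operations.xor z (fE a) < 8" using fE_xor z a by auto
      have eqv: "(fE y = Bit_Operations.xor (fE z) a) = (y = Bit_Operations.xor z (fE a))"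
        unfolding x1 using f y x2 by metis
      have sg: "(-1::complex) ^ (\<Sum>j<3. if bit b j \<and> bit (fE z) j then 1 else 0) =
          (-1) ^ (\<Sum>j<3. if bit (gE b) j \<and> bit z j then 1 else 0)" using gE_sign b z by auto
      show "mat 8 8 (\<lambda>(y,z). pauli_op 3 a b $$ (fE y, fE z)) $$ (y,z) = pauli_op 3 (fE a) (gE b) $$ (y,z)"
        using y z fy fz by (simp add: pauli_index eqv sg)
    qed simp_all
    finally show ?thesis .
  qed
  moreover have "fE a < 2^3" "gE b < 2^3" using f gE_lt a b by auto
  ultimately show "Em * pauli_op 3 a b * adj Em \<in> pauli_group 3"
    using pauli_op_in_group by simp
qed




definition U1 :: "complex mat" where "U1 = Em * kron_mat Zm (1\<^sub>m 4)"
definition H3 :: "complex mat" where "H3 = kron_mat Hm (kron_mat Hm Hm)"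
definition U2 :: "complex mat" where "U2 = H3 * Em * kron_mat (Zm * Hm) (1\<^sub>m 4)"

lemma Zm_carrier: "Zm \<in> carrier_mat 2 2" and Hm_carrier: "Hm \<in> carrier_mat 2 2"
  and Em_carrier: "Em \<in> carrier_mat 8 8"
  unfolding Zm_def Hm_def Em_def by auto

lemma H3_carrier: "H3 \<in> carrier_mat 8 8"
  unfolding H3_def using kron_mat_carrier[OF Hm_carrier kron_mat_carrier[OF Hm_carrier Hm_carrier]] by simp

lemma U1_cliff: "U1 \<in> clifford 3"
proof -
  have "kron_mat Zm (1\<^sub>m (2^2)) \<in> clifford (1+2)" by (rule clifford_kron[OF Z_cliff clifford_one])
  moreover have "(1::nat)+2 = 3" "(2::nat)^2 = 4" by simp_all
  ultimately have "kron_mat Zm (1\<^sub>m 4) \<in> clifford 3" by metis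
  then show ?thesis unfolding U1_def by (rule clifford_mult[OF E_cliff])
qed

lemma U2_cliff: "U2 \<in> clifford 3"
proof -
  have "kron_mat (Zm * Hm) (1\<^sub>m (2^2)) \<in> clifford (1+2)"
    by (rule clifford_kron[OF clifford_mult[OF Z_cliff H_cliff] clifford_one])
  moreover have "(1::nat)+2 = 3" "(2::nat)^2 = 4" by simp_all
  ultimately have K: "kron_mat (Zm * Hm) (1\<^sub>m 4) \<in> clifford 3" by metis
  have "kron_mat Hm (kron_mat Hm Hm) \<in> clifford (1+(1+1))"
    by (rule clifford_kron[OF H_cliff clifford_kron[OF H_cliff H_cliff]])
  moreover have "(1::nat)+(1+1) = 3" by simp
  ultimately have "H3 \<in> clifford 3" unfolding H3_def by metis
  then show ?thesis unfolding U2_def by (intro clifford_mult K E_cliff)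
qed

lemma psi0: "R_state \<theta> $ 0 = hc" and psi1: "R_state \<theta> $ 1 = hc * cis \<theta>"
  and psi1': "R_state \<theta> $ Suc 0 = hc * cis \<theta>"
  and dim_psi: "dim_vec (R_state \<theta>) = 2"
  by (simp_all add: R_state_def hc_def)

lemma fE_iff: "y < 8 \<Longrightarrow> x < 8 \<Longrightarrow> (y = fE x) = (x = fE y)"
  by (metis fE_inv)

lemma Em_vec: "dim_vec w = 8 \<Longrightarrow> y < 8 \<Longrightarrow> (Em *\<^sub>v w) $ y = w $ (fE y)"
proof -
  assume w: "dim_vec w = 8" and y: "y < 8"
  have "(Em *\<^sub>v w) $ y = (\<Sum>x<8. (if x = fE y then 1 else 0) * w $ x)"
    unfolding Em_def using w y
    by (auto simp: scalar_prod_def atLeast0LessThan fE_iff intro!: sum.cong)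
  also have "\<dots> = w $ (fE y)" using fE_lt[OF y] by (simp add: if_distrib[of "\<lambda>t. t * _"] cong: if_cong)
  finally show ?thesis .
qed

lemma sum8: "(\<Sum>j<(8::nat). f j) = f 0 + f 1 + f 2 + f 3 + f 4 + f 5 + f 6 + f 7"
  by (simp add: eval_nat_numeral)

lemma hc3: "hc * (hc * hc) = hc / 2" using hc_sq by (simp add: mult.assoc[symmetric])

lemma e00_idx: "j < 4 \<Longrightarrow> unit_vec 4 0 $ j = (if j = 0 then 1 else 0)" by simp

lemma less8_cases:
  assumes "y < (8::nat)"
  obtains "y = 0" | "y = 1" | "y = 2" | "y = 3" | "y = 4" | "y = 5" | "y = 6" | "y = 7"
proof -
  have "y \<in> {..<8}" using assms by simp
  moreover have "{..<(8::nat)} = {0,1,2,3,4,5,6,7}" by (auto simp: lessThan_def)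
  ultimately show ?thesis using that by auto
qed

lemma LHS3:
  assumes y: "y < 8"
  shows "kron_vec (R_state \<theta>) (kron_vec (R_state \<theta>) (R_state \<theta>)) $ y =
    hc / 2 * cis \<theta> ^ (\<Sum>j<3. if bit y j then 1 else 0)"
proof -
  have "kron_vec (R_state \<theta>) (kron_vec (R_state \<theta>) (R_state \<theta>)) $ y =
     R_state \<theta> $ (y div 4) * (R_state \<theta> $ ((y mod 4) div 2) * R_state \<theta> $ ((y mod 4) mod 2))"
    using y by (simp add: index_kron_vec dim_psi)
  also have "\<dots> = hc / 2 * cis \<theta> ^ (\<Sum>j<3. if bit y j then 1 else 0)"
    using y by (cases rule: less8_cases) (simp_all add: psi0 psi1 psi1' sum3 bit_0 mult_ac hc_sq hc_sq2)
  finally show ?thesis .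
qed

lemma mat2_vec: "dim_vec v = 2 \<Longrightarrow> i < 2 \<Longrightarrow> (mat 2 2 f *\<^sub>v v) $ i = f (i,0) * v $ 0 + f (i,1) * v $ 1"
  by (simp add: scalar_prod_def eval_nat_numeral)

lemma dims2[simp]: "dim_row Hm = 2" "dim_col Hm = 2" "dim_row Zm = 2" "dim_col Zm = 2"
  "dim_row Em = 8" "dim_col Em = 8"
  by (simp_all add: Hm_def Zm_def Em_def)

lemma Zpsi_dim: "dim_vec (Zm *\<^sub>v R_state \<theta>) = 2" unfolding Zm_def by simp
lemma Zpsi0: "(Zm *\<^sub>v R_state \<theta>) $ 0 = hc"
  unfolding Zm_def by (subst mat2_vec) (simp_all add: dim_psi psi0 psi1 psi1')
lemma Zpsi1: "(Zm *\<^sub>v R_state \<theta>) $ 1 = - hc * cis \<theta>"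
  unfolding Zm_def by (subst mat2_vec) (simp_all add: dim_psi psi0 psi1 psi1')

lemma Zpsi1': "(Zm *\<^sub>v R_state \<theta>) $ Suc 0 = - hc * cis \<theta>" using Zpsi1 by simp

lemma Hpsi_dim: "dim_vec (Hm *\<^sub>v R_state \<theta>) = 2" unfolding Hm_def by simp
lemma Hpsi0: "(Hm *\<^sub>v R_state \<theta>) $ 0 = (1 + cis \<theta>) / 2"
  unfolding Hm_def by (subst mat2_vec) (simp_all add: dim_psi psi0 psi1 psi1' hc_sq hc_sq2 algebra_simps)
lemma Hpsi1: "(Hm *\<^sub>v R_state \<theta>) $ 1 = (1 - cis \<theta>) / 2"
  unfolding Hm_def by (subst mat2_vec) (simp_all add: dim_psi psi0 psi1 psi1' hc_sq hc_sq2 algebra_simps)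

lemma Hpsi1': "(Hm *\<^sub>v R_state \<theta>) $ Suc 0 = (1 - cis \<theta>) / 2" using Hpsi1 by simp

lemma ZHpsi_dim: "dim_vec (Zm *\<^sub>v (Hm *\<^sub>v R_state \<theta>)) = 2" unfolding Zm_def by simp
lemma ZHpsi0: "(Zm *\<^sub>v (Hm *\<^sub>v R_state \<theta>)) $ 0 = (1 + cis \<theta>) / 2"
  unfolding Zm_def by (subst mat2_vec) (simp_all add: Hpsi_dim Hpsi0 Hpsi1')
lemma ZHpsi1: "(Zm *\<^sub>v (Hm *\<^sub>v R_state \<theta>)) $ 1 = (cis \<theta> - 1) / 2"
  unfolding Zm_def by (subst mat2_vec) (simp_all add: Hpsi_dim Hpsi0 Hpsi1' algebra_simps)


lemma ZHpsi1': "(Zm *\<^sub>v (Hm *\<^sub>v R_state \<theta>)) $ Suc 0 = (cis \<theta> - 1) / 2" using ZHpsi1 by simp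

lemma e00_carrier: "unit_vec 4 0 \<in> carrier_vec 4" by simp

lemma kron_Zm1_carrier: "kron_mat Zm (1\<^sub>m 4) \<in> carrier_mat 8 8"
  using kron_mat_carrier[OF Zm_carrier one_carrier_mat[of 4]] by simp

lemma kron_ZH1_carrier: "kron_mat (Zm * Hm) (1\<^sub>m 4) \<in> carrier_mat 8 8"
  using kron_mat_carrier[OF mult_carrier_mat[OF Zm_carrier Hm_carrier] one_carrier_mat[of 4]] by simp

lemma v0_dim: "dim_vec (kron_vec (R_state \<theta>) (unit_vec 4 0)) = 8"
  by (simp add: dim_psi)

lemma U1_apply: "U1 *\<^sub>v kron_vec (R_state \<theta>) (unit_vec 4 0) = Em *\<^sub>v kron_vec (Zm *\<^sub>v R_state \<theta>) (unit_vec 4 0)"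
proof -
  have "U1 *\<^sub>v kron_vec (R_state \<theta>) (unit_vec 4 0) = Em *\<^sub>v (kron_mat Zm (1\<^sub>m 4) *\<^sub>v kron_vec (R_state \<theta>) (unit_vec 4 0))"
    unfolding U1_def by (rule assoc_mult_mat_vec[OF Em_carrier kron_Zm1_carrier carrier_vecI[OF v0_dim]])
  also have "kron_mat Zm (1\<^sub>m 4) *\<^sub>v kron_vec (R_state \<theta>) (unit_vec 4 0) = kron_vec (Zm *\<^sub>v R_state \<theta>) (1\<^sub>m 4 *\<^sub>v unit_vec 4 0)"
    by (rule kron_mult_vec[OF Zm_carrier one_carrier_mat]) (simp_all add: dim_psi)
  also have "1\<^sub>m 4 *\<^sub>v unit_vec 4 0 = (unit_vec 4 0 :: complex vec)" by simp
  finally show ?thesis .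
qed

lemma U2_apply: "U2 *\<^sub>v kron_vec (R_state \<theta>) (unit_vec 4 0) = H3 *\<^sub>v (Em *\<^sub>v kron_vec (Zm *\<^sub>v (Hm *\<^sub>v R_state \<theta>)) (unit_vec 4 0))"
proof -
  have HE: "H3 * Em \<in> carrier_mat 8 8" using H3_carrier Em_carrier by simp
  have "U2 *\<^sub>v kron_vec (R_state \<theta>) (unit_vec 4 0) = (H3 * Em) *\<^sub>v (kron_mat (Zm * Hm) (1\<^sub>m 4) *\<^sub>v kron_vec (R_state \<theta>) (unit_vec 4 0))"
    unfolding U2_def by (rule assoc_mult_mat_vec[OF HE kron_ZH1_carrier carrier_vecI[OF v0_dim]])
  also have "kron_mat (Zm * Hm) (1\<^sub>m 4) *\<^sub>v kron_vec (R_state \<theta>) (unit_vec 4 0) = kron_vec ((Zm * Hm) *\<^sub>v R_state \<theta>) (1\<^sub>m 4 *\<^sub>v unit_vec 4 0)"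
    by (rule kron_mult_vec[OF mult_carrier_mat[OF Zm_carrier Hm_carrier] one_carrier_mat]) (simp_all add: dim_psi)
  also have "(Zm * Hm) *\<^sub>v R_state \<theta> = Zm *\<^sub>v (Hm *\<^sub>v R_state \<theta>)"
    by (rule assoc_mult_mat_vec[OF Zm_carrier Hm_carrier carrier_vecI[OF dim_psi]])
  also have "1\<^sub>m 4 *\<^sub>v unit_vec 4 0 = (unit_vec 4 0 :: complex vec)" by simp
  also have "(H3 * Em) *\<^sub>v kron_vec (Zm *\<^sub>v (Hm *\<^sub>v R_state \<theta>)) (unit_vec 4 0) =
      H3 *\<^sub>v (Em *\<^sub>v kron_vec (Zm *\<^sub>v (Hm *\<^sub>v R_state \<theta>)) (unit_vec 4 0))"
    by (rule assoc_mult_mat_vec[OF H3_carrier Em_carrier carrier_vecI]) (simp add: ZHpsi_dim)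
  finally show ?thesis .
qed

lemma U1v:
  assumes y: "y < 8"
  shows "(U1 *\<^sub>v kron_vec (R_state \<theta>) (unit_vec 4 0)) $ y = (if y = 0 then hc else if y = 7 then - hc * cis \<theta> else 0)"
proof -
  have "(U1 *\<^sub>v kron_vec (R_state \<theta>) (unit_vec 4 0)) $ y = kron_vec (Zm *\<^sub>v R_state \<theta>) (unit_vec 4 0) $ (fE y)"
    unfolding U1_apply by (rule Em_vec[OF _ y]) (simp add: Zpsi_dim)
  also have "\<dots> = (if y = 0 then hc else if y = 7 then - hc * cis \<theta> else 0)"
    using y by (cases rule: less8_cases) (simp_all add: fE_def index_kron_vec Zpsi_dim Zpsi0 Zpsi1')
  finally show ?thesis .
qed

lemma gv:
  assumes x: "x < 8"
  shows "(Em *\<^sub>v kron_vec (Zm *\<^sub>v (Hm *\<^sub>v R_state \<theta>)) (unit_vec 4 0)) $ x =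
    (if x = 0 then (1 + cis \<theta>) / 2 else if x = 7 then (cis \<theta> - 1) / 2 else 0)"
proof -
  have "(Em *\<^sub>v kron_vec (Zm *\<^sub>v (Hm *\<^sub>v R_state \<theta>)) (unit_vec 4 0)) $ x = kron_vec (Zm *\<^sub>v (Hm *\<^sub>v R_state \<theta>)) (unit_vec 4 0) $ (fE x)"
    by (rule Em_vec[OF _ x]) (simp add: ZHpsi_dim)
  also have "\<dots> = (if x = 0 then (1 + cis \<theta>) / 2 else if x = 7 then (cis \<theta> - 1) / 2 else 0)"
    using x by (cases rule: less8_cases) (simp_all add: fE_def index_kron_vec ZHpsi_dim ZHpsi0 ZHpsi1')
  finally show ?thesis .
qed


lemma H3_idx: "y < 8 \<Longrightarrow> x < 8 \<Longrightarrow> H3 $$ (y,x) =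
   Hm $$ (y div 4, x div 4) * (Hm $$ (y mod 4 div 2, x mod 4 div 2) * Hm $$ (y mod 4 mod 2, x mod 4 mod 2))"
  unfolding H3_def by (simp add: index_kron_mat)

lemma Hm_idx: "i < 2 \<Longrightarrow> j < 2 \<Longrightarrow> Hm $$ (i,j) = (if i = 1 \<and> j = 1 then - hc else hc)"
  unfolding Hm_def by simp

lemma U2v:
  assumes y: "y < 8"
  shows "(U2 *\<^sub>v kron_vec (R_state \<theta>) (unit_vec 4 0)) $ y =
    (if y = 0 \<or> y = 3 \<or> y = 5 \<or> y = 6 then hc / 2 * cis \<theta> else hc / 2)"
proof -
  let ?g = "Em *\<^sub>v kron_vec (Zm *\<^sub>v (Hm *\<^sub>v R_state \<theta>)) (unit_vec 4 0)"
  have gd: "dim_vec ?g = 8" by simp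
  have "(U2 *\<^sub>v kron_vec (R_state \<theta>) (unit_vec 4 0)) $ y = (\<Sum>x<8. H3 $$ (y,x) * ?g $ x)"
    unfolding U2_apply using y H3_carrier gd by (simp add: scalar_prod_def atLeast0LessThan)
  also have "\<dots> = H3 $$ (y,0) * ((1 + cis \<theta>) / 2) + H3 $$ (y,7) * ((cis \<theta> - 1) / 2)"
    by (simp add: sum8 gv del: index_mult_mat_vec)
  also have "\<dots> = (if y = 0 \<or> y = 3 \<or> y = 5 \<or> y = 6 then hc / 2 * cis \<theta> else hc / 2)"
    using y by (cases rule: less8_cases) (simp_all add: H3_idx Hm_idx mult_ac hc_sq hc_sq2 field_simps)
  finally show ?thesis .
qed

lemma three_qubit:
  assumes y: "y < 8"
  shows "kron_vec (R_state \<theta>) (kron_vec (R_state \<theta>) (R_state \<theta>)) $ y =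
    (1 - cis \<theta> ^ 2) / 2 * (U1 *\<^sub>v kron_vec (R_state \<theta>) (unit_vec 4 0)) $ y +
    cis \<theta> * (U2 *\<^sub>v kron_vec (R_state \<theta>) (unit_vec 4 0)) $ y"
  unfolding LHS3[OF y] U1v[OF y] U2v[OF y]
  using y by (cases rule: less8_cases) (simp_all add: sum3 bit_0 field_simps power2_eq_square)




lemma tdim: "dim_vec (tensor_pow (R_state \<theta>) m) = 2^m"
  by (induction m) (simp_all add: dim_psi)

lemma div_helper: fixes q r d :: nat assumes "r < d" shows "(d * q + r) div d = q"
  using divmod_simps(1)[OF assms, of q] by (simp add: mult.commute)

lemma kron_assoc: "kron_vec (kron_vec u v) w = kron_vec u (kron_vec v w)"
proof (rule eq_vecI)
  show dims: "dim_vec (kron_vec (kron_vec u v) w) = dim_vec (kron_vec u (kron_vec v w))" by simp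
  fix i assume "i < dim_vec (kron_vec u (kron_vec v w))"
  then have i: "i < dim_vec u * dim_vec v * dim_vec w" by (simp add: mult.assoc)
  have dw: "dim_vec w > 0" using i by (cases "dim_vec w") auto
  have i2: "i div dim_vec w < dim_vec u * dim_vec v" using div_lt[OF i] .
  have i3: "i < dim_vec u * (dim_vec v * dim_vec w)" using i by (simp add: mult.assoc)
  have e1: "i div dim_vec w div dim_vec v = i div (dim_vec v * dim_vec w)"
    by (subst mult.commute) (rule div_mult2_eq[symmetric])
  have e2: "i mod (dim_vec v * dim_vec w) div dim_vec w = i div dim_vec w mod dim_vec v"
  proof -
    have "i mod (dim_vec v * dim_vec w) = dim_vec w * (i div dim_vec w mod dim_vec v) + i mod dim_vec w"
      by (subst mult.commute) (rule mod_mult2_eq)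
    then show ?thesis using dw div_helper[of "i mod dim_vec w" "dim_vec w"] by simp
  qed
  have e3: "i mod (dim_vec v * dim_vec w) mod dim_vec w = i mod dim_vec w"
    by (simp add: mod_mod_cancel)
  show "kron_vec (kron_vec u v) w $ i = kron_vec u (kron_vec v w) $ i"
    using i i2 i3 mod_lt[OF i3] by (simp add: index_kron_vec e1 e2 e3)
qed

lemma dec_single: assumes s: "s \<in> stabilizer_states n" shows "dec n 1 s"
  unfolding dec_def
proof (intro exI[of _ "\<lambda>_. 1"] exI[of _ "\<lambda>_. s"] conjI allI impI)
  show "s \<in> stabilizer_states n" for i :: nat using s .
  show "s = vec (2^n) (\<lambda>x. \<Sum>i<(1::nat). 1 * (s $ x))"
  proof (rule eq_vecI)
    fix i assume "i < dim_vec (vec (2^n) (\<lambda>x. \<Sum>i<(1::nat). 1 * (s $ x)))"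
    then show "s $ i = vec (2^n) (\<lambda>x. \<Sum>i<(1::nat). 1 * (s $ x)) $ i" by simp
  qed (simp add: stab_dim[OF s])
qed

lemma dec_T0: "dec 0 1 (tensor_pow (R_state \<theta>) 0)"
proof -
  have "tensor_pow (R_state \<theta>) 0 = unit_vec (2^0) 0" by (auto intro!: eq_vecI)
  then show ?thesis using dec_single[OF e0_stab[of 0]] by simp
qed

lemma dec_psi: "dec 1 2 (R_state \<theta>)"
proof -
  have s0: "unit_vec (2^1) 0 \<in> stabilizer_states 1" by (rule e0_stab)
  have s1: "Xm *\<^sub>v unit_vec (2^1) 0 \<in> stabilizer_states 1" by (rule stab_apply[OF X_cliff s0])
  have "dec 1 (1+1) (vec (2^1) (\<lambda>x. hc * unit_vec (2^1) 0 $ x + (hc * cis \<theta>) * (Xm *\<^sub>v unit_vec (2^1) 0) $ x))"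
    by (rule dec_lin[OF dec_single[OF s0] dec_single[OF s1]])
  moreover have "vec (2^1) (\<lambda>x. hc * unit_vec (2^1) 0 $ x + (hc * cis \<theta>) * (Xm *\<^sub>v unit_vec (2^1) 0) $ x) = R_state \<theta>"
  proof (rule eq_vecI)
    fix i assume "i < dim_vec (R_state \<theta>)"
    then have "i < 2" by (simp add: dim_psi)
    then have "i = 0 \<or> i = 1" by auto
    then show "vec (2^1) (\<lambda>x. hc * unit_vec (2^1) 0 $ x + (hc * cis \<theta>) * (Xm *\<^sub>v unit_vec (2^1) 0) $ x) $ i = R_state \<theta> $ i"
      by (elim disjE) (simp_all add: Xm_def scalar_prod_def eval_nat_numeral psi0 psi1')
  qed (simp add: dim_psi)
  ultimately show ?thesis by (simp add: numeral_2_eq_2)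
qed

lemma U_carrier: "U1 \<in> carrier_mat 8 8" "U2 \<in> carrier_mat 8 8"
  using clifford_carrier[OF U1_cliff] clifford_carrier[OF U2_cliff] by simp_all

lemma step_eq:
  fixes \<theta> :: real and k :: nat
  defines "T \<equiv> tensor_pow (R_state \<theta>)"
  defines "V \<equiv> kron_vec (T (Suc k)) (unit_vec (2^2) 0)"
  shows "T (Suc (Suc (Suc k))) = vec (2^(Suc (Suc (Suc k))))
     (\<lambda>x. (1 - cis \<theta> ^ 2) / 2 * (kron_mat (1\<^sub>m (2^k)) U1 *\<^sub>v V) $ x + cis \<theta> * (kron_mat (1\<^sub>m (2^k)) U2 *\<^sub>v V) $ x)"
proof -
  let ?v0 = "kron_vec (R_state \<theta>) (unit_vec 4 0)"
  have Td: "dim_vec (T k) = 2^k" unfolding T_def by (rule tdim)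
  have V': "V = kron_vec (T k) ?v0"
    unfolding V_def T_def by (simp add: kron_assoc)
  have GV: "kron_mat (1\<^sub>m (2^k)) U *\<^sub>v V = kron_vec (T k) (U *\<^sub>v ?v0)" if U: "U \<in> carrier_mat 8 8" for U
  proof -
    have "kron_mat (1\<^sub>m (2^k)) U *\<^sub>v V = kron_vec (1\<^sub>m (2^k) *\<^sub>v T k) (U *\<^sub>v ?v0)"
      unfolding V' by (rule kron_mult_vec[OF one_carrier_mat U Td v0_dim])
    also have "1\<^sub>m (2^k) *\<^sub>v T k = T k" by (rule one_mult_mat_vec[OF carrier_vecI[OF Td]])
    finally show ?thesis .
  qed
  have TT: "T (Suc (Suc (Suc k))) = kron_vec (T k) (kron_vec (R_state \<theta>) (kron_vec (R_state \<theta>) (R_state \<theta>)))"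
    unfolding T_def by (simp add: kron_assoc)
  show ?thesis
  proof (rule eq_vecI)
    show "dim_vec (T (Suc (Suc (Suc k)))) = dim_vec (vec (2^(Suc (Suc (Suc k)))) (\<lambda>x. (1 - cis \<theta> ^ 2) / 2 * (kron_mat (1\<^sub>m (2^k)) U1 *\<^sub>v V) $ x + cis \<theta> * (kron_mat (1\<^sub>m (2^k)) U2 *\<^sub>v V) $ x))"
      unfolding T_def tdim by simp
    fix x assume "x < dim_vec (vec (2^(Suc (Suc (Suc k)))) (\<lambda>x. (1 - cis \<theta> ^ 2) / 2 * (kron_mat (1\<^sub>m (2^k)) U1 *\<^sub>v V) $ x + cis \<theta> * (kron_mat (1\<^sub>m (2^k)) U2 *\<^sub>v V) $ x))"
    then have x: "x < 2^(Suc (Suc (Suc k)))" by simp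
    then have x': "x < 2^k * 8" by simp
    have xm: "x mod 8 < 8" by simp
    have d8: "dim_vec (U1 *\<^sub>v ?v0) = 8" "dim_vec (U2 *\<^sub>v ?v0) = 8"
      "dim_vec (kron_vec (R_state \<theta>) (kron_vec (R_state \<theta>) (R_state \<theta>))) = 8"
      using U_carrier dim_psi[of \<theta>] by simp_all
    show "T (Suc (Suc (Suc k))) $ x = vec (2^(Suc (Suc (Suc k)))) (\<lambda>x. (1 - cis \<theta> ^ 2) / 2 * (kron_mat (1\<^sub>m (2^k)) U1 *\<^sub>v V) $ x + cis \<theta> * (kron_mat (1\<^sub>m (2^k)) U2 *\<^sub>v V) $ x) $ x"
      unfolding TT GV[OF U_carrier(1)] GV[OF U_carrier(2)]
      using x x' d8 Td by (simp add: index_kron_vec three_qubit[OF xm] algebra_simps)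
  qed
qed

lemma decT: "dec m (2^(m div 2 + 1)) (tensor_pow (R_state \<theta>) m)"
proof (induction m rule: less_induct)
  case (less m)
  show ?case
  proof (cases m)
    case 0
    then show ?thesis using dec_mono[OF dec_T0[of \<theta>]] by simp
  next
    case (Suc m1)
    show ?thesis
    proof (cases m1)
      case 0
      have "dec (0+1) (1*2) (kron_vec (tensor_pow (R_state \<theta>) 0) (R_state \<theta>))"
        by (rule dec_kron[OF dec_T0 dec_psi])
      then show ?thesis using Suc 0 by simp
    next
      case (Suc m2)
      show ?thesis
      proof (cases m2)
        case 0
        have d1: "dec 1 2 (tensor_pow (R_state \<theta>) 1)"
          using dec_kron[OF dec_T0 dec_psi, of \<theta>] by simp
        have "dec (1+1) (2*2) (kron_vec (tensor_pow (R_state \<theta>) 1) (R_state \<theta>))"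
          by (rule dec_kron[OF d1 dec_psi])
        then show ?thesis using \<open>m = Suc m1\<close> Suc 0 by (simp add: numeral_eq_Suc)
      next
        case (Suc k)
        have m: "m = Suc (Suc (Suc k))" using \<open>m = Suc m1\<close> \<open>m1 = Suc m2\<close> Suc by simp
        let ?F = "2 ^ (Suc k div 2 + 1) :: nat"
        have IH: "dec (Suc k) ?F (tensor_pow (R_state \<theta>) (Suc k))"
          using less.IH[of "Suc k"] m by simp
        define V where "V = kron_vec (tensor_pow (R_state \<theta>) (Suc k)) (unit_vec (2^2) 0)"
        have dV: "dec (Suc k + 2) (?F * 1) V"
          unfolding V_def by (rule dec_kron[OF IH dec_single[OF e0_stab]])
        have dV': "dec (Suc (Suc (Suc k))) ?F V" using dV by simp
        have G1: "kron_mat (1\<^sub>m (2^k)) U1 \<in> clifford (Suc (Suc (Suc k)))"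
          using clifford_kron[OF clifford_one U1_cliff, of k] by (simp add: numeral_3_eq_3)
        have G2: "kron_mat (1\<^sub>m (2^k)) U2 \<in> clifford (Suc (Suc (Suc k)))"
          using clifford_kron[OF clifford_one U2_cliff, of k] by (simp add: numeral_3_eq_3)
        have "dec (Suc (Suc (Suc k))) (?F + ?F) (vec (2^(Suc (Suc (Suc k))))
           (\<lambda>x. (1 - cis \<theta> ^ 2) / 2 * (kron_mat (1\<^sub>m (2^k)) U1 *\<^sub>v V) $ x + cis \<theta> * (kron_mat (1\<^sub>m (2^k)) U2 *\<^sub>v V) $ x))"
          by (rule dec_lin[OF dec_apply[OF G1 dV'] dec_apply[OF G2 dV']])
        then have "dec (Suc (Suc (Suc k))) (?F + ?F) (tensor_pow (R_state \<theta>) (Suc (Suc (Suc k))))"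
          unfolding V_def using step_eq[of \<theta> k] by simp
        moreover have "?F + ?F = 2 ^ (Suc (Suc (Suc k)) div 2 + 1)" by simp
        ultimately show ?thesis using m by simp
      qed
    qed
  qed
qed

theorem theorem2:
  fixes \<theta> :: real
  shows "(\<lambda>m. real (stabilizer_rank m (tensor_pow (R_state \<theta>) m))) \<in> O(\<lambda>m. 2 powr (real m / 2))"
proof (rule bigoI)
  show "\<forall>\<^sub>F m in at_top. norm (real (stabilizer_rank m (tensor_pow (R_state \<theta>) m))) \<le> 2 * norm (2 powr (real m / 2))"
  proof (rule always_eventually, rule allI)
    fix m :: nat
    have r: "stabilizer_rank m (tensor_pow (R_state \<theta>) m) \<le> 2^(m div 2 + 1)"
      by (rule dec_rank[OF decT])
    have "real (2^(m div 2 + 1)) = 2 * 2 powr real (m div 2)"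
      by (simp add: powr_realpow)
    also have "\<dots> \<le> 2 * 2 powr (real m / 2)"
    proof -
      have "real (m div 2) \<le> real m / 2" by linarith
      then show ?thesis by simp
    qed
    finally have B: "real (2^(m div 2 + 1)) \<le> 2 * 2 powr (real m / 2)" .
    have "real (stabilizer_rank m (tensor_pow (R_state \<theta>) m)) \<le> real (2^(m div 2 + 1))"
      using r by (simp only: of_nat_le_iff)
    then have "real (stabilizer_rank m (tensor_pow (R_state \<theta>) m)) \<le> 2 * 2 powr (real m / 2)"
      using B by (rule order_trans)
    then show "norm (real (stabilizer_rank m (tensor_pow (R_state \<theta>) m))) \<le> 2 * norm (2 powr (real m / 2))"
      by simp
  qed
qed


end
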